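(* Let $\Sigma$ be a finite connected multigraph (loops allowed) and $\varphi,\vartheta\colon V(\Sigma)\to\mathbb{R}_{\ge0}$ functions such that $\Delta(\varphi)-\Delta(\vartheta)=F-G$, where $F$ and $G$ are effective divisors on $\Sigma$ of degree at most $d$. Suppose there are (not necessarily distinct) vertices $v,w$ with $\varphi(v)=\vartheta(w)=0$. Then \[\max_{u\in V(\Sigma)}|\varphi(u)-\vartheta(u)|\le d\cdot\operatorname{diam}(\Sigma).\]
   Context: A divisor on $\Sigma$ is a formal sum $\sum_v a_v(v)$ with $a_v\in\mathbb{R}$; it is effective if all $a_v\ge0$, and its degree is $\sum_v a_v$. For $\varphi\colon V(\Sigma)\to\mathbb{R}$, the Laplacian is the divisor $\Delta(\varphi)(v)=\sum_{e=vw}(\varphi(v)-\varphi(w))$, the sum over edges $e$ incident to $v$ with other endpoint $w$ (loops contribute $0$). $\operatorname{diam}(\Sigma)$ is the maximum over pairs of vertices of the number of edges in a shortest path joining them. *)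

theory Defs
  imports Complex_Main
begin

text \<open>A finite multigraph (loops allowed) is given by a finite vertex set V, a finite set
of edge identifiers E, and two endpoint maps src, tgt (the orientation is irrelevant:
an edge e joins src e and tgt e; a loop has src e = tgt e).\<close>

definition multigraph :: "'v set \<Rightarrow> 'e set \<Rightarrow> ('e \<Rightarrow> 'v) \<Rightarrow> ('e \<Rightarrow> 'v) \<Rightarrow> bool" where
  "multigraph V E src tgt \<longleftrightarrow> finite V \<and> finite E \<and> (\<forall>e\<in>E. src e \<in> V \<and> tgt e \<in> V)"

definition adjacent :: "'e set \<Rightarrow> ('e \<Rightarrow> 'v) \<Rightarrow> ('e \<Rightarrow> 'v) \<Rightarrow> 'v \<Rightarrow> 'v \<Rightarrow> bool" where
  "adjacent E src tgt u w \<longleftrightarrow>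
     (\<exists>e\<in>E. (src e = u \<and> tgt e = w) \<or> (src e = w \<and> tgt e = u))"

definition walk_of_length ::
  "'v set \<Rightarrow> 'e set \<Rightarrow> ('e \<Rightarrow> 'v) \<Rightarrow> ('e \<Rightarrow> 'v) \<Rightarrow> 'v \<Rightarrow> 'v \<Rightarrow> nat \<Rightarrow> bool" where
  "walk_of_length V E src tgt u w n \<longleftrightarrow>
     (\<exists>xs. length xs = Suc n \<and> hd xs = u \<and> last xs = w \<and> set xs \<subseteq> V \<and>
           (\<forall>i<n. adjacent E src tgt (xs ! i) (xs ! Suc i)))"

definition connected_graph :: "'v set \<Rightarrow> 'e set \<Rightarrow> ('e \<Rightarrow> 'v) \<Rightarrow> ('e \<Rightarrow> 'v) \<Rightarrow> bool" where
  "connected_graph V E src tgt \<longleftrightarrow> (\<forall>u\<in>V. \<forall>w\<in>V. \<exists>n. walk_of_length V E src tgt u w n)"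

definition graph_dist :: "'v set \<Rightarrow> 'e set \<Rightarrow> ('e \<Rightarrow> 'v) \<Rightarrow> ('e \<Rightarrow> 'v) \<Rightarrow> 'v \<Rightarrow> 'v \<Rightarrow> nat" where
  "graph_dist V E src tgt u w = (LEAST n. walk_of_length V E src tgt u w n)"

definition diam :: "'v set \<Rightarrow> 'e set \<Rightarrow> ('e \<Rightarrow> 'v) \<Rightarrow> ('e \<Rightarrow> 'v) \<Rightarrow> nat" where
  "diam V E src tgt = Max {graph_dist V E src tgt u w | u w. u \<in> V \<and> w \<in> V}"

text \<open>Laplacian: sum over edges incident to v of (phi v - phi(other endpoint)).
Each edge incident to v is counted via the endpoint equal to v; loops contribute 0.\<close>
definition laplacian :: "'e set \<Rightarrow> ('e \<Rightarrow> 'v) \<Rightarrow> ('e \<Rightarrow> 'v) \<Rightarrow> ('v \<Rightarrow> real) \<Rightarrow> 'v \<Rightarrow> real" where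
  "laplacian E src tgt \<phi> v =
     (\<Sum>e\<in>{e\<in>E. src e = v}. \<phi> v - \<phi> (tgt e)) + (\<Sum>e\<in>{e\<in>E. tgt e = v}. \<phi> v - \<phi> (src e))"

definition effective :: "'v set \<Rightarrow> ('v \<Rightarrow> real) \<Rightarrow> bool" where
  "effective V D \<longleftrightarrow> (\<forall>v\<in>V. D v \<ge> 0)"

definition degree :: "'v set \<Rightarrow> ('v \<Rightarrow> real) \<Rightarrow> real" where
  "degree V D = (\<Sum>v\<in>V. D v)"

end

theory Submission
  imports Defs
begin

lemma lap_sum_edges:
  assumes "finite E" "finite S"
  shows "(\<Sum>x\<in>S. laplacian E src tgt h x) =
    (\<Sum>e\<in>E. (if src e \<in> S then h (src e) - h (tgt e) else 0) + (if tgt e \<in> S then h (tgt e) - h (src e) else 0))"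
proof -
  have 1: "(\<Sum>e\<in>{e\<in>E. src e = x}. h x - h (tgt e)) = (\<Sum>e\<in>E. if src e = x then h (src e) - h (tgt e) else 0)" for x
    using assms by (auto simp add: sum.inter_filter[symmetric] intro!: sum.cong)
  have 2: "(\<Sum>e\<in>{e\<in>E. tgt e = x}. h x - h (src e)) = (\<Sum>e\<in>E. if tgt e = x then h (tgt e) - h (src e) else 0)" for x
    using assms by (auto simp add: sum.inter_filter[symmetric] intro!: sum.cong)
  have "(\<Sum>x\<in>S. laplacian E src tgt h x) = (\<Sum>x\<in>S. \<Sum>e\<in>E. (if src e = x then h (src e) - h (tgt e) else 0) + (if tgt e = x then h (tgt e) - h (src e) else 0))"
    unfolding laplacian_def 1 2 by (simp add: sum.distrib)
  also have "\<dots> = (\<Sum>e\<in>E. \<Sum>x\<in>S. (if src e = x then h (src e) - h (tgt e) else 0) + (if tgt e = x then h (tgt e) - h (src e) else 0))"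
    by (rule sum.swap)
  also have "\<dots> = (\<Sum>e\<in>E. (if src e \<in> S then h (src e) - h (tgt e) else 0) + (if tgt e \<in> S then h (tgt e) - h (src e) else 0))"
    using assms(2) by (simp add: sum.distrib sum.delta)
  finally show ?thesis .
qed

lemma edge_bound:
  assumes mg: "multigraph V E src tgt"
    and lap: "\<forall>x\<in>V. laplacian E src tgt h x = F x - G x"
    and effF: "effective V F" and effG: "effective V G" and degF: "degree V F \<le> d"
    and adj: "adjacent E src tgt a b" and aV: "a \<in> V" and bV: "b \<in> V"
  shows "h a - h b \<le> d"
proof (cases "h a \<le> h b")
  case True
  have "0 \<le> degree V F" using effF mg unfolding effective_def degree_def multigraph_def
    by (simp add: sum_nonneg)
  then show ?thesis using True degF by linarith
next
  case False
  define S where "S = {x\<in>V. h x \<ge> h a}"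
  have fE: "finite E" and fV: "finite V" and ends: "\<forall>e\<in>E. src e \<in> V \<and> tgt e \<in> V"
    using mg unfolding multigraph_def by auto
  have fS: "finite S" using fV S_def by simp
  define g where "g e = (if src e \<in> S then h (src e) - h (tgt e) else 0) + (if tgt e \<in> S then h (tgt e) - h (src e) else 0)" for e
  have gnn: "g e \<ge> 0" if "e \<in> E" for e
    using ends that unfolding g_def S_def by auto
  obtain e0 where e0: "e0 \<in> E" "(src e0 = a \<and> tgt e0 = b) \<or> (src e0 = b \<and> tgt e0 = a)"
    using adj unfolding adjacent_def by auto
  have ge: "g e0 = h a - h b" using e0 False aV bV unfolding g_def S_def by auto
  also have "\<dots> \<le> (\<Sum>e\<in>E. g e)" unfolding \<open>g e0 = h a - h b\<close>[symmetric]
    by (rule member_le_sum) (use gnn e0 fE in auto)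
  also have "\<dots> = (\<Sum>x\<in>S. laplacian E src tgt h x)"
    using lap_sum_edges[OF fE fS, of src tgt h] unfolding g_def by simp
  also have "\<dots> = (\<Sum>x\<in>S. F x - G x)" using lap S_def by (auto intro: sum.cong)
  also have "\<dots> \<le> (\<Sum>x\<in>S. F x)" using effG S_def unfolding effective_def
    by (auto intro: sum_mono)
  also have "\<dots> \<le> (\<Sum>x\<in>V. F x)" using effF fV S_def unfolding effective_def
    by (intro sum_mono2) auto
  also have "\<dots> \<le> d" using degF unfolding degree_def .
  finally show ?thesis using ge by simp
qed

lemma walk_bound:
  assumes mg: "multigraph V E src tgt"
    and lap: "\<forall>x\<in>V. laplacian E src tgt h x = F x - G x"
    and effF: "effective V F" and effG: "effective V G" and degF: "degree V F \<le> d"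
    and lapn: "\<forall>x\<in>V. laplacian E src tgt (\<lambda>x. - h x) x = G x - F x"
    and degG: "degree V G \<le> d"
    and walk: "walk_of_length V E src tgt a b n"
  shows "\<bar>h b - h a\<bar> \<le> d * real n"
proof -
  obtain xs where xs: "length xs = Suc n" "hd xs = a" "last xs = b" "set xs \<subseteq> V"
    "\<forall>i<n. adjacent E src tgt (xs ! i) (xs ! Suc i)"
    using walk unfolding walk_of_length_def by blast
  have inV: "xs ! i \<in> V" if "i \<le> n" for i using xs(1,4) that by (auto simp: subset_iff)
  have step: "\<bar>h (xs ! Suc i) - h (xs ! i)\<bar> \<le> d" if "i < n" for i
  proof -
    have A: "adjacent E src tgt (xs ! i) (xs ! Suc i)" using xs(5) that by auto
    have A': "adjacent E src tgt (xs ! Suc i) (xs ! i)" using A unfolding adjacent_def by blast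
    have 1: "h (xs ! i) - h (xs ! Suc i) \<le> d"
      by (rule edge_bound[OF mg lap effF effG degF A]) (use inV that in auto)
    have 2: "h (xs ! Suc i) - h (xs ! i) \<le> d"
      by (rule edge_bound[OF mg lap effF effG degF A']) (use inV that in auto)
    show ?thesis using 1 2 by linarith
  qed
  have "\<bar>h (xs ! i) - h (xs ! 0)\<bar> \<le> d * real i" if "i \<le> n" for i
    using that
  proof (induction i)
    case 0 then show ?case by simp
  next
    case (Suc i)
    then have "\<bar>h (xs ! i) - h (xs ! 0)\<bar> \<le> d * real i" by simp
    moreover have "\<bar>h (xs ! Suc i) - h (xs ! i)\<bar> \<le> d" using step Suc.prems by simp
    ultimately show ?case by (simp add: algebra_simps)
  qed
  moreover have "xs ! 0 = a" using xs(1,2) by (metis hd_conv_nth list.size(3) nat.distinct(1))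
  moreover have "xs ! n = b" using xs(1,3) by (metis diff_Suc_1 last_conv_nth list.size(3) nat.distinct(1))
  ultimately show ?thesis by force
qed

theorem mainTheorem8:
  fixes V :: "'v set" and E :: "'e set" and src tgt :: "'e \<Rightarrow> 'v"
    and \<phi> \<theta> F G :: "'v \<Rightarrow> real" and d :: real and v w :: 'v
  assumes "multigraph V E src tgt"
    and "connected_graph V E src tgt"
    and "\<forall>u\<in>V. \<phi> u \<ge> 0" and "\<forall>u\<in>V. \<theta> u \<ge> 0"
    and "effective V F" and "effective V G"
    and "degree V F \<le> d" and "degree V G \<le> d"
    and "\<forall>u\<in>V. laplacian E src tgt \<phi> u - laplacian E src tgt \<theta> u = F u - G u"
    and "v \<in> V" and "w \<in> V" and "\<phi> v = 0" and "\<theta> w = 0"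
  shows "Max ((\<lambda>u. \<bar>\<phi> u - \<theta> u\<bar>) ` V) \<le> d * real (diam V E src tgt)"
proof -
  note mg = assms(1)
  have fE: "finite E" and fV: "finite V" using mg unfolding multigraph_def by auto
  define h where "h x = \<phi> x - \<theta> x" for x
  have lapd: "laplacian E src tgt (\<lambda>x. f1 x - f2 x) x = laplacian E src tgt f1 x - laplacian E src tgt f2 x"
    for f1 f2 x
  proof -
    have eq: "\<And>y. (f1 x - f2 x) - (f1 y - f2 y) = (f1 x - f1 y) - (f2 x - f2 y)" by simp
    show ?thesis unfolding laplacian_def eq sum_subtractf by simp
  qed
  have lapm: "laplacian E src tgt (\<lambda>x. - f1 x) x = - laplacian E src tgt f1 x" for f1 x
  proof -
    have eq: "\<And>y. (- f1 x) - (- f1 y) = - (f1 x - f1 y)" by simp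
    show ?thesis unfolding laplacian_def eq sum_negf by simp
  qed
  have lap: "\<forall>x\<in>V. laplacian E src tgt h x = F x - G x"
    using assms(9) unfolding h_def lapd by simp
  have lapn: "\<forall>x\<in>V. laplacian E src tgt (\<lambda>x. - h x) x = G x - F x"
    using lap unfolding lapm by simp
  have dist_le: "graph_dist V E src tgt a b \<le> diam V E src tgt" if "a \<in> V" "b \<in> V" for a b
  proof -
    have "{graph_dist V E src tgt u w | u w. u \<in> V \<and> w \<in> V} = (\<lambda>(u,w). graph_dist V E src tgt u w) ` (V \<times> V)"
      by auto
    then have "finite {graph_dist V E src tgt u w | u w. u \<in> V \<and> w \<in> V}" using fV by simp
    then show ?thesis unfolding diam_def using that by (intro Max_ge) auto
  qed
  have bound: "\<bar>h b - h a\<bar> \<le> d * real (diam V E src tgt)" if "a \<in> V" "b \<in> V" for a b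
  proof -
    have "\<exists>n. walk_of_length V E src tgt a b n" using assms(2) that unfolding connected_graph_def by auto
    then have W: "walk_of_length V E src tgt a b (graph_dist V E src tgt a b)"
      unfolding graph_dist_def by (rule LeastI_ex)
    have d0: "0 \<le> d" using assms(5,7) fV unfolding effective_def degree_def
      by (smt (verit) sum_nonneg)
    have "\<bar>h b - h a\<bar> \<le> d * real (graph_dist V E src tgt a b)"
      by (rule walk_bound[OF mg lap assms(5,6,7) lapn assms(8) W])
    also have "\<dots> \<le> d * real (diam V E src tgt)"
      using dist_le[OF that] d0 by (simp add: mult_left_mono)
    finally show ?thesis .
  qed
  show ?thesis
  proof (subst Max_le_iff)
    show "finite ((\<lambda>u. \<bar>\<phi> u - \<theta> u\<bar>) ` V)" using fV by simp
    show "(\<lambda>u. \<bar>\<phi> u - \<theta> u\<bar>) ` V \<noteq> {}" using assms(10) by auto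
    show "\<forall>a\<in>(\<lambda>u. \<bar>\<phi> u - \<theta> u\<bar>) ` V. a \<le> d * real (diam V E src tgt)"
    proof
      fix a assume "a \<in> (\<lambda>u. \<bar>\<phi> u - \<theta> u\<bar>) ` V"
      then obtain u where u: "u \<in> V" "a = \<bar>h u\<bar>" unfolding h_def by auto
      have 1: "\<bar>h u - h v\<bar> \<le> d * real (diam V E src tgt)" using bound u(1) assms(10) by blast
      have 2: "\<bar>h u - h w\<bar> \<le> d * real (diam V E src tgt)" using bound u(1) assms(11) by blast
      have "h v \<le> 0" "h w \<ge> 0" using assms(3,4,10,11,12,13) unfolding h_def by auto
      then show "a \<le> d * real (diam V E src tgt)" using 1 2 u(2) by linarith
    qed
  qed
qed

end
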